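(* Let $N\ge3$. One has $\pi_Y\circ\mathcal F=\mathcal F_Y\circ\pi_{\widetilde Y}$ as maps $\mathbb{Q}(\mu_N)\langle\langle\widetilde X\rangle\rangle\to\mathbb{Q}(\mu_N)\langle\langle Y\rangle\rangle$, and $\mathbf p\circ\mathcal F=\mathcal F\circ\widetilde{\mathbf q}$ as maps $\mathbb{Q}(\mu_N)\langle\langle\widetilde X\rangle\rangle\to\mathbb{Q}(\mu_N)\langle\langle X\rangle\rangle$.
   Context: $\zeta_N=\exp(2\pi i/N)$, $\mu_N$ the complex $N$-th roots of unity, $\iota:\{1,\dots,N\}\to\mathbb{Z}/N\mathbb{Z}$ the residue-class bijection. $K\langle\langle\mathcal L\rangle\rangle$: noncommutative formal power series over $\mathcal L$. Alphabets $X=\{x_0\}\cup\{x_\zeta:\zeta\in\mu_N\}$, $Y=\{y_{k,\zeta}:k\ge1,\zeta\in\mu_N\}$, $\widetilde X=\{\tilde x\}\cup\{\tilde x_\alpha:\alpha\in\mathbb{Z}/N\mathbb{Z}\}$, $\widetilde Y=\{\tilde y_{k,\alpha}:k\ge1,\alpha\in\mathbb{Z}/N\mathbb{Z}\}$, with $y_{k,\zeta}\equiv x_0^{k-1}x_\zeta$ and $\tilde y_{k,\alpha}\equiv\tilde x^{k-1}\tilde x_\alpha$. Using the decompositions $K\langle\langle X\rangle\rangle=K\langle\langle Y\rangle\rangle\oplus K\langle\langle X\rangle\rangle x_0$ and $K\langle\langle\widetilde X\rangle\rangle=K\langle\langle\widetilde Y\rangle\rangle\oplus K\langle\langle\widetilde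 X\rangle\rangle\tilde x$, $\pi_Y$ and $\pi_{\widetilde Y}$ are the projections onto the first summands. $\mathbf p$ is the linear automorphism of $K\langle\langle X\rangle\rangle$ with $\mathbf p(x_0^{k_1-1}x_{\zeta_1}x_0^{k_2-1}x_{\zeta_2}\cdots x_0^{k_r-1}x_{\zeta_r}x_0^{k_{r+1}-1})=x_0^{k_1-1}x_{\zeta_1}x_0^{k_2-1}x_{\zeta_1\zeta_2}\cdots x_0^{k_r-1}x_{\zeta_1\cdots\zeta_r}x_0^{k_{r+1}-1}$, and $\widetilde{\mathbf q}$ is the linear automorphism of $K\langle\langle\widetilde X\rangle\rangle$ with $\widetilde{\mathbf q}(\tilde x^{k_1-1}\tilde x_{\alpha_1}\cdots\tilde x^{k_r-1}\tilde x_{\alpha_r}\tilde x^{k_{r+1}-1})=\tilde x^{k_1-1}\tilde x_{\alpha_1-\alpha_2}\cdots\tilde x^{k_{r-1}-1}\tilde x_{\alpha_{r-1}-\alpha_r}\tilde x^{k_r-1}\tilde x_{\alpha_r}\tilde x^{k_{r+1}-1}$ ($r\ge0$, $k_i\ge1$). $\mathcal F:\mathbb{Q}(\mu_N)\langle\langle\widetilde X\rangle\rangle\to\mathbb{Q}(\mu_N)\langle\langle X\rangle\rangle$ is the continuous algebra isomorphism with $\tilde x\mapsto x_0$, $\tilde x_\alpha\mapsto\sum_{m=1}^N\zeta_N^{-m\iota^{-1}(\alpha)}x_{\zeta_N^m}$, and $\mathcal F_Y$ is its restriction $\mathbb{Q}(\mu_N)\langle\langle\widetilde Y\rangle\rangle\to\mathbb{Q}(\mu_N)\langle\langle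 Y\rangle\rangle$, $\tilde y_{k,\alpha}\mapsto\sum_{m=1}^N\zeta_N^{-m\iota^{-1}(\alpha)}y_{k,\zeta_N^m}$. *)

theory Defs
  imports Complex_Main
begin

text \<open>A letter is either the distinguished letter (x_0 resp. tilde x) or an indexed letter.
  For X the index is a root of unity zeta in mu_N (a complex number);
  for tilde X the index is a residue class alpha in Z/NZ, represented by its
  canonical representative in {0..<N}.\<close>
datatype 'a letter = Z0 | Lt 'a

text \<open>Noncommutative formal power series: coefficient functions on words.
  A series over an alphabet A is a function vanishing off the words over A.\<close>
type_synonym 'a series = "'a letter list \<Rightarrow> complex"

definition zeta :: "nat \<Rightarrow> complex" where
  "zeta N = cis (2 * pi / real N)"

definition muN :: "nat \<Rightarrow> complex set" where
  "muN N = {z. z ^ N = 1}"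

definition is_subfield :: "complex set \<Rightarrow> bool" where
  "is_subfield K \<longleftrightarrow> 0 \<in> K \<and> 1 \<in> K \<and> (\<forall>a\<in>K. \<forall>b\<in>K. a + b \<in> K \<and> a - b \<in> K \<and> a * b \<in> K)
     \<and> (\<forall>a\<in>K. inverse a \<in> K)"

definition QmuN :: "nat \<Rightarrow> complex set" where
  "QmuN N = {z. \<forall>K. is_subfield K \<and> muN N \<subseteq> K \<longrightarrow> z \<in> K}"

definition xAlph :: "nat \<Rightarrow> complex letter set" where
  "xAlph N = insert Z0 (Lt ` muN N)"

definition tAlph :: "nat \<Rightarrow> nat letter set" where
  "tAlph N = insert Z0 (Lt ` {..<N})"

definition iota_inv :: "nat \<Rightarrow> nat \<Rightarrow> nat" where
  "iota_inv N \<alpha> = (if \<alpha> mod N = 0 then N else \<alpha> mod N)"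

definition ser_one :: "'a series" where
  "ser_one w = (if w = [] then 1 else 0)"

definition ser_mult :: "'a series \<Rightarrow> 'a series \<Rightarrow> 'a series" where
  "ser_mult S T w = (\<Sum>i\<le>length w. S (take i w) * T (drop i w))"

definition F_letter :: "nat \<Rightarrow> nat letter \<Rightarrow> complex series" where
  "F_letter N a = (case a of
      Z0 \<Rightarrow> (\<lambda>w. if w = [Z0] then 1 else 0)
    | Lt \<alpha> \<Rightarrow> (\<lambda>w. \<Sum>m=1..N. inverse (zeta N ^ (m * iota_inv N \<alpha>))
                          * (if w = [Lt (zeta N ^ m)] then 1 else 0)))"

definition F_word :: "nat \<Rightarrow> nat letter list \<Rightarrow> complex series" where
  "F_word N u = foldr (\<lambda>a acc. ser_mult (F_letter N a) acc) u ser_one"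

text \<open>Continuous extension: F(S) = sum_u S(u) F(u); the coefficient of a word w only
  receives contributions from words u of the same length (letter images are homogeneous of
  degree 1), hence is a finite sum.\<close>
definition F :: "nat \<Rightarrow> nat series \<Rightarrow> complex series" where
  "F N S w = (\<Sum>u\<in>{u. length u = length w \<and> set u \<subseteq> tAlph N}. S u * F_word N u w)"

text \<open>F_Y is the restriction of F to Q(mu_N)<<tilde Y>>, with tilde Y-series viewed inside
  Q(mu_N)<<tilde X>> via tilde y_{k,alpha} = tilde x^{k-1} tilde x_alpha (and likewise for Y).\<close>
definition F_Y :: "nat \<Rightarrow> nat series \<Rightarrow> complex series" where
  "F_Y N S = F N S"

text \<open>Words in Y (resp. tilde Y) are exactly the words that are empty or do not end with
  the distinguished letter; pi_Y kills the summand K<<X>> x_0.\<close>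
definition piY :: "'a series \<Rightarrow> 'a series" where
  "piY S w = (if w = [] \<or> last w \<noteq> Z0 then S w else 0)"

definition linext :: "'a letter set \<Rightarrow> ('a letter list \<Rightarrow> 'a letter list) \<Rightarrow> 'a series \<Rightarrow> 'a series" where
  "linext A f S w' = (\<Sum>w\<in>{w. length w = length w' \<and> set w \<subseteq> A \<and> f w = w'}. S w)"

fun p_aux :: "complex \<Rightarrow> complex letter list \<Rightarrow> complex letter list" where
  "p_aux c [] = []"
| "p_aux c (Z0 # w) = Z0 # p_aux c w"
| "p_aux c (Lt z # w) = Lt (c * z) # p_aux (c * z) w"

definition p_word :: "complex letter list \<Rightarrow> complex letter list" where
  "p_word w = p_aux 1 w"

definition p :: "nat \<Rightarrow> complex series \<Rightarrow> complex series" where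
  "p N = linext (xAlph N) p_word"

fun next_alpha :: "nat letter list \<Rightarrow> nat" where
  "next_alpha [] = 0"
| "next_alpha (Z0 # w) = next_alpha w"
| "next_alpha (Lt b # w) = b"

fun q_word :: "nat \<Rightarrow> nat letter list \<Rightarrow> nat letter list" where
  "q_word N [] = []"
| "q_word N (Z0 # w) = Z0 # q_word N w"
| "q_word N (Lt a # w) = Lt ((a + N - next_alpha w) mod N) # q_word N w"

definition q :: "nat \<Rightarrow> nat series \<Rightarrow> nat series" where
  "q N = linext (tAlph N) (q_word N)"

end

theory Submission imports Defs "HOL-Analysis.Analysis" begin

lemma zpow_mod: "(z::complex)^N = 1 \<Longrightarrow> z ^ k = z ^ (k mod N)"
proof -
  assume h: "z^N = 1"
  have "z ^ k = z ^ (N * (k div N) + k mod N)" by (metis div_mult_mod_eq mult.commute)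
  also have "\<dots> = z ^ (k mod N)" by (simp only: power_add power_mult h power_one mult_1)
  finally show ?thesis .
qed

lemma zeta_pow: "N > 0 \<Longrightarrow> zeta N ^ m = exp(2 * of_real pi * \<i> * of_nat m / of_nat N)"
  unfolding zeta_def DeMoivre cis_conv_exp by (simp add: exp_of_nat_mult[symmetric] field_simps)

lemma zeta_pow_root: "N > 0 \<Longrightarrow> (zeta N ^ m) ^ N = 1"
  by (simp add: zeta_pow complex_root_unity)

lemma zeta_surj: assumes "N > 0" "z^N = 1" shows "\<exists>m\<in>{1..N}. z = zeta N ^ m"
proof -
  from assms complex_roots_unity[of N] obtain j where j: "j < N" "z = exp(2 * of_real pi * \<i> * of_nat j / of_nat N)"
    by auto
  show ?thesis
  proof (cases "j = 0")
    case True
    then have "z = zeta N ^ N" using j assms complex_root_unity_eq[of N j N] by (simp add: zeta_pow)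
    then show ?thesis using assms by auto
  next
    case False
    then show ?thesis using j assms by (auto simp: zeta_pow intro!: bexI[of _ j])
  qed
qed

lemma zeta_inj: assumes "N > 0" "m \<in> {1..N}" "m' \<in> {1..N}" "zeta N ^ m = zeta N ^ m'" shows "m = m'"
proof -
  have "m mod N = m' mod N" using assms complex_root_unity_eq[of N m m'] by (simp add: zeta_pow)
  then show ?thesis using assms
    by (metis atLeastAtMost_iff le_neq_implies_less mod_less mod_self not_one_le_zero mod_less_divisor le_eq_less_or_eq less_one)
qed

lemma cL_Lt: assumes "N > 0"
  shows "F_letter N (Lt \<alpha>) [Lt z] = (if z^N = 1 then inverse (z^\<alpha>) else 0)"
proof (cases "z^N = 1")
  case True
  then obtain m0 where m0: "m0 \<in> {1..N}" "z = zeta N ^ m0" using zeta_surj assms by blast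
  have "\<forall>m\<in>{1..N}. (z = zeta N ^ m) = (m = m0)" using m0 zeta_inj[OF assms] by metis
  then have "F_letter N (Lt \<alpha>) [Lt z] = (\<Sum>m=1..N. if m = m0 then inverse (zeta N ^ (m * iota_inv N \<alpha>)) else 0)"
    unfolding F_letter_def letter.case by (intro sum.cong) auto
  also have "\<dots> = inverse (z ^ iota_inv N \<alpha>)" using m0 by (simp add: power_mult)
  also have "z ^ iota_inv N \<alpha> = z ^ \<alpha>"
    using zpow_mod[OF True, of "iota_inv N \<alpha>"] zpow_mod[OF True, of \<alpha>] assms
    by (simp add: iota_inv_def)
  finally show ?thesis using True by simp
next
  case False
  have "\<forall>m. z \<noteq> zeta N ^ m" using False zeta_pow_root[OF assms] by metis
  then show ?thesis using False unfolding F_letter_def by simp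
qed

fun fw :: "nat \<Rightarrow> nat letter list \<Rightarrow> complex letter list \<Rightarrow> complex" where
  "fw N [] [] = 1"
| "fw N (a#u) (b#w) = F_letter N a [b] * fw N u w"
| "fw N _ _ = 0"

lemma F_letter_len: "length v \<noteq> 1 \<Longrightarrow> F_letter N a v = 0"
  by (cases a) (auto simp: F_letter_def intro!: sum.neutral)

lemma F_word_fw: "F_word N u w = fw N u w"
proof (induction u arbitrary: w)
  case Nil
  then show ?case by (cases w) (auto simp: F_word_def ser_one_def)
next
  case (Cons a u)
  have FW: "F_word N (a#u) w = ser_mult (F_letter N a) (F_word N u) w" by (simp add: F_word_def)
  show ?case
  proof (cases w)
    case Nil
    then show ?thesis using FW by (simp add: ser_mult_def F_letter_len)
  next
    case (Cons b w')
    have "\<forall>i\<in>{..length w}. F_letter N a (take i w) * F_word N u (drop i w)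
       = (if i = 1 then F_letter N a [b] * F_word N u w' else 0)"
    proof
      fix i assume "i \<in> {..length w}"
      then show "F_letter N a (take i w) * F_word N u (drop i w)
       = (if i = 1 then F_letter N a [b] * F_word N u w' else 0)"
        using Cons by (cases "i = 1") (auto simp: F_letter_len)
    qed
    then have "ser_mult (F_letter N a) (F_word N u) w = (\<Sum>i\<le>length w. if i = 1 then F_letter N a [b] * F_word N u w' else 0)"
      unfolding ser_mult_def by (intro sum.cong refl) blast
    also have "\<dots> = F_letter N a [b] * F_word N u w'"
      using Cons by (auto simp: sum.delta Suc_le_eq)
    finally have "ser_mult (F_letter N a) (F_word N u) w = F_letter N a [b] * F_word N u w'" .
    then show ?thesis using FW Cons Cons.IH by simp
  qed
qed

lemma cL_Z0Z0: "F_letter N Z0 [Z0] = 1" by (simp add: F_letter_def)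
lemma cL_Z0Lt: "F_letter N Z0 [Lt z] = 0" by (simp add: F_letter_def)
lemma cL_LtZ0: "F_letter N (Lt a) [Z0] = 0" by (simp add: F_letter_def)

lemma inv_helper: "(Y::complex) \<noteq> 0 \<Longrightarrow> X * Y = Z \<Longrightarrow> inverse X = Y * inverse Z"
  by (cases "X = 0") (auto simp: inverse_mult_distrib)

fun pinv :: "complex \<Rightarrow> complex letter list \<Rightarrow> complex letter list" where
  "pinv c [] = []"
| "pinv c (Z0 # w) = Z0 # pinv c w"
| "pinv c (Lt y # w) = Lt (y / c) # pinv y w"

lemma next_lt: "N > 0 \<Longrightarrow> set u \<subseteq> tAlph N \<Longrightarrow> next_alpha u < N"
  by (induction u rule: next_alpha.induct) (auto simp: tAlph_def)

lemma key: "N > 0 \<Longrightarrow> c^N = 1 \<Longrightarrow> set u \<subseteq> tAlph N \<Longrightarrow>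
   fw N u (pinv c w) = c ^ next_alpha u * fw N (q_word N u) w"
proof (induction u arbitrary: c w)
  case Nil
  then show ?case
  proof (cases w)
    case (Cons x w') then show ?thesis by (cases x) auto
  qed simp
next
  case (Cons a u)
  note IH = Cons.IH
  note prems = Cons.prems
  have su: "set u \<subseteq> tAlph N" using Cons.prems by auto
  show ?case
  proof (cases a)
    case Z0
    show ?thesis
    proof (cases w)
      case (Cons x w')
      then show ?thesis using Z0 Cons.IH[OF Cons.prems(1,2) su]
        by (cases x) (auto simp: cL_Z0Z0 cL_Z0Lt)
    qed (simp add: Z0)
  next
    case (Lt \<alpha>)
    note aL = this
    have aN: "\<alpha> < N" using Cons.prems Lt by (auto simp: tAlph_def)
    define nx where "nx = next_alpha u"
    have nxN: "nx < N" using next_lt[OF Cons.prems(1) su] nx_def by simp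
    show ?thesis
    proof (cases w)
      case (Cons x w')
      note wC = this
      show ?thesis
      proof (cases x)
        case Z0
        then show ?thesis using Lt Cons by (simp add: cL_LtZ0)
      next
        case (Lt z)
        note xL = this
        show ?thesis
        proof (cases "z^N = 1")
          case True
          have N0: "N > 0" by (rule prems(1))
          have z0: "z \<noteq> 0"
          proof
            assume "z = 0"
            then have "(0::complex) ^ N = 1" using True by simp
            then show False using N0 by (cases N) auto
          qed
          have zc: "(z/c)^N = 1" using True prems(2) by (simp add: power_divide)
          have e1: "z ^ ((\<alpha> + N - nx) mod N) = z ^ (\<alpha> + N - nx)"
            by (rule zpow_mod[OF True, symmetric])
          have an: "\<alpha> + N - nx + nx = \<alpha> + N" using nxN by simp
          have "z ^ (\<alpha> + N - nx) * z ^ nx = z ^ (\<alpha> + N - nx + nx)" by (simp only: power_add)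
          also have "\<dots> = z ^ \<alpha> * z ^ N" by (simp only: an power_add)
          also have "\<dots> = z ^ \<alpha>" by (simp only: True mult_1_right)
          finally have e2h: "z ^ (\<alpha> + N - nx) * z ^ nx = z ^ \<alpha>" .
          have e2: "inverse (z ^ (\<alpha> + N - nx)) = z ^ nx * inverse (z ^ \<alpha>)"
            by (rule inv_helper[OF _ e2h]) (simp add: z0)
          have IHz: "fw N u (pinv z w') = z ^ nx * fw N (q_word N u) w'"
            using IH[OF N0 True su] nx_def by simp
          have e3: "inverse ((z/c)^\<alpha>) = c^\<alpha> * inverse (z^\<alpha>)"
            by (simp add: power_divide divide_inverse inverse_mult_distrib power_mult_distrib power_inverse)
          have pw: "pinv c w = Lt (z/c) # pinv z w'" using wC xL by simp
          have "fw N (a#u) (pinv c w) = F_letter N (Lt \<alpha>) [Lt (z/c)] * fw N u (pinv z w')"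
            unfolding pw aL by (simp only: fw.simps)
          also have "\<dots> = inverse ((z/c)^\<alpha>) * fw N u (pinv z w')"
            using zc N0 by (simp only: cL_Lt if_True simp_thms)
          finally have L: "fw N (a#u) (pinv c w) = c^\<alpha> * inverse (z^\<alpha>) * (z ^ nx * fw N (q_word N u) w')"
            unfolding e3 IHz .
          have qa: "q_word N (a#u) = Lt ((\<alpha> + N - nx) mod N) # q_word N u" unfolding aL nx_def by simp
          have "fw N (q_word N (a#u)) w = F_letter N (Lt ((\<alpha> + N - nx) mod N)) [Lt z] * fw N (q_word N u) w'"
            unfolding qa wC xL by (simp only: fw.simps)
          also have "\<dots> = inverse (z ^ ((\<alpha> + N - nx) mod N)) * fw N (q_word N u) w'"
            using True N0 by (simp only: cL_Lt if_True simp_thms)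
          finally have R: "fw N (q_word N (a#u)) w = (z ^ nx * inverse (z ^ \<alpha>)) * fw N (q_word N u) w'"
            unfolding e1 e2 .
          have na: "next_alpha (a#u) = \<alpha>" unfolding aL by simp
          show ?thesis unfolding L R na by (simp only: mult_ac)
        next
          case False
          have zc: "(z/c)^N \<noteq> 1" using False prems(2) by (simp add: power_divide)
          have "fw N (a#u) (pinv c w) = 0" using zc prems(1) aL wC xL by (simp add: cL_Lt)
          moreover have "fw N (q_word N (a#u)) w = 0" using False prems(1) aL wC xL by (simp add: cL_Lt)
          ultimately show ?thesis by simp
        qed
      qed
    qed (simp add: Lt)
  qed
qed

lemma p_pinv: "c \<noteq> 0 \<Longrightarrow> Lt 0 \<notin> set w \<Longrightarrow> p_aux c (pinv c w) = w"
  by (induction c w rule: pinv.induct) auto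

lemma pinv_p: "c \<noteq> 0 \<Longrightarrow> Lt 0 \<notin> set w \<Longrightarrow> pinv c (p_aux c w) = w"
  by (induction c w rule: p_aux.induct) auto

lemma len_p: "length (p_aux c w) = length w"
  by (induction c w rule: p_aux.induct) auto

lemma len_pinv: "length (pinv c w) = length w"
  by (induction c w rule: pinv.induct) auto

lemma p_xalph: "c^N = 1 \<Longrightarrow> set w \<subseteq> xAlph N \<Longrightarrow> set (p_aux c w) \<subseteq> xAlph N"
  by (induction c w rule: p_aux.induct) (auto simp: xAlph_def muN_def power_mult_distrib)

lemma pinv_xalph: "c^N = 1 \<Longrightarrow> set w \<subseteq> xAlph N \<Longrightarrow> set (pinv c w) \<subseteq> xAlph N"
  by (induction c w rule: pinv.induct) (auto simp: xAlph_def muN_def power_divide)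

lemma no_Lt0: "N > 0 \<Longrightarrow> set w \<subseteq> xAlph N \<Longrightarrow> Lt 0 \<notin> set w"
proof
  assume "N > 0" "set w \<subseteq> xAlph N" "Lt 0 \<in> set w"
  then have "Lt 0 \<in> xAlph N" by blast
  then have "(0::complex) ^ N = 1" by (auto simp: xAlph_def muN_def)
  then show False using \<open>N > 0\<close> by (cases N) auto
qed

lemma fw_support: "N > 0 \<Longrightarrow> fw N u w \<noteq> 0 \<Longrightarrow> set w \<subseteq> xAlph N"
proof (induction N u w rule: fw.induct)
  case (2 N a u b w)
  have "b \<in> xAlph N"
  proof (cases b)
    case (Lt z)
    then show ?thesis using 2 by (cases a) (auto simp: cL_Z0Lt cL_Lt xAlph_def muN_def split: if_splits)
  qed (simp add: xAlph_def)
  then show ?case using 2 by auto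
qed auto

lemma fw_pattern: "fw N u w \<noteq> 0 \<Longrightarrow> map (\<lambda>x. x = Z0) u = map (\<lambda>x. x = Z0) w"
proof (induction N u w rule: fw.induct)
  case (2 N a u b w)
  then show ?case by (cases a; cases b) (auto simp: cL_Z0Lt cL_LtZ0)
qed auto

lemma fw_len: "fw N u w \<noteq> 0 \<Longrightarrow> length u = length w"
  using fw_pattern by (metis length_map)

lemma sum_p: assumes "N > 0" "set u \<subseteq> tAlph N"
  shows "(\<Sum>w\<in>{w. length w = length w' \<and> set w \<subseteq> xAlph N \<and> p_word w = w'}. fw N u w)
     = fw N (q_word N u) w'"
proof (cases "set w' \<subseteq> xAlph N")
  case True
  have "{w. length w = length w' \<and> set w \<subseteq> xAlph N \<and> p_word w = w'} = {pinv 1 w'}"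
  proof (rule set_eqI, rule iffI)
    fix w assume "w \<in> {w. length w = length w' \<and> set w \<subseteq> xAlph N \<and> p_word w = w'}"
    then have "set w \<subseteq> xAlph N" "p_word w = w'" by auto
    then show "w \<in> {pinv 1 w'}" using pinv_p[of 1 w] no_Lt0[OF assms(1)] by (auto simp: p_word_def)
  next
    fix w assume "w \<in> {pinv 1 w'}"
    then have w: "w = pinv 1 w'" by simp
    have "p_word (pinv 1 w') = w'" using p_pinv[of 1 w'] no_Lt0[OF assms(1) True] by (simp add: p_word_def)
    then show "w \<in> {w. length w = length w' \<and> set w \<subseteq> xAlph N \<and> p_word w = w'}"
      using w len_pinv[of 1 w'] pinv_xalph[of 1 N w'] True by simp
  qed
  then show ?thesis using key[OF assms(1) _ assms(2), of 1 w'] by simp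
next
  case False
  have "{w. length w = length w' \<and> set w \<subseteq> xAlph N \<and> p_word w = w'} = {}"
    using p_xalph[of 1 N] False by (auto simp: p_word_def)
  moreover have "fw N (q_word N u) w' = 0" using fw_support[OF assms(1)] False by blast
  ultimately show ?thesis by (metis sum.empty)
qed

lemma finite_muN: "N > 0 \<Longrightarrow> finite (muN N)"
  unfolding muN_def using complex_roots_unity[of N] by simp

lemma finite_words: "finite A \<Longrightarrow> finite {w. length w = n \<and> set w \<subseteq> A}"
  using finite_lists_length_eq[of A n] by (simp add: conj_commute)

lemma q_len: "length (q_word N u) = length u"
  by (induction N u rule: q_word.induct) auto

lemma q_talph: "N > 0 \<Longrightarrow> set (q_word N u) \<subseteq> tAlph N"
  by (induction N u rule: q_word.induct) (auto simp: tAlph_def)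

lemma p_part:
  fixes N :: nat and S :: "nat series"
  assumes "N \<ge> 3"
  shows "p N (F N S) = F N (q N S)"
proof -
  have N0: "N > 0" using assms(1) by simp
  have fT: "finite (tAlph N)" by (simp add: tAlph_def)
  have fX: "finite (xAlph N)" using finite_muN[OF N0] by (simp add: xAlph_def)
  show "p N (F N S) = F N (q N S)"
  proof
    fix w' :: "complex letter list"
    define T where "T = {u. length u = length w' \<and> set u \<subseteq> tAlph N}"
    define A where "A = {w. length w = length w' \<and> set w \<subseteq> xAlph N \<and> p_word w = w'}"
    have fTT: "finite T" unfolding T_def using finite_words[OF fT] by simp
    have fA: "finite A" unfolding A_def
      by (rule finite_subset[OF _ finite_words[OF fX, of "length w'"]]) auto
    have "p N (F N S) w' = (\<Sum>w\<in>A. \<Sum>u\<in>T. S u * fw N u w)"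
      unfolding p_def linext_def F_def F_word_fw A_def T_def by (intro sum.cong) auto
    also have "\<dots> = (\<Sum>u\<in>T. S u * (\<Sum>w\<in>A. fw N u w))"
      by (subst sum.swap) (simp add: sum_distrib_left)
    also have "\<dots> = (\<Sum>u\<in>T. S u * fw N (q_word N u) w')"
      unfolding A_def T_def using sum_p[OF N0] by (intro sum.cong) auto
    also have "\<dots> = (\<Sum>v\<in>T. \<Sum>u\<in>{u. u \<in> T \<and> q_word N u = v}. S u * fw N (q_word N u) w')"
      by (rule sum.group[symmetric, OF fTT fTT]) (auto simp: T_def q_len intro: subsetD[OF q_talph[OF N0]])
    also have "\<dots> = (\<Sum>v\<in>T. (\<Sum>u\<in>{u. u \<in> T \<and> q_word N u = v}. S u) * fw N v w')"
    proof (intro sum.cong refl)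
      fix v assume "v \<in> T"
      have "(\<Sum>u\<in>{u. u \<in> T \<and> q_word N u = v}. S u) * fw N v w' = (\<Sum>u\<in>{u. u \<in> T \<and> q_word N u = v}. S u * fw N v w')"
        by (rule sum_distrib_right)
      also have "\<dots> = (\<Sum>u\<in>{u. u \<in> T \<and> q_word N u = v}. S u * fw N (q_word N u) w')"
        by (intro sum.cong refl) simp
      finally show "(\<Sum>u\<in>{u. u \<in> T \<and> q_word N u = v}. S u * fw N (q_word N u) w') = (\<Sum>u\<in>{u. u \<in> T \<and> q_word N u = v}. S u) * fw N v w'"
        by simp
    qed
    also have "\<dots> = F N (q N S) w'"
      unfolding F_def F_word_fw q_def linext_def
    proof (intro sum.cong)
      show "T = {u. length u = length w' \<and> set u \<subseteq> tAlph N}" by (simp add: T_def)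
    next
      fix v assume "v \<in> {u. length u = length w' \<and> set u \<subseteq> tAlph N}"
      then have lv: "length v = length w'" by simp
      have "{u. u \<in> T \<and> q_word N u = v} = {w. length w = length v \<and> set w \<subseteq> tAlph N \<and> q_word N w = v}"
        unfolding T_def using lv q_len[of N] by auto
      then show "(\<Sum>u\<in>{u. u \<in> T \<and> q_word N u = v}. S u) * fw N v w' = (\<Sum>w\<in>{w. length w = length v \<and> set w \<subseteq> tAlph N \<and> q_word N w = v}. S w) * fw N v w'"
        by simp
    qed
    finally show "p N (F N S) w' = F N (q N S) w'" .
  qed
qed


theorem lemma3p3:
  fixes N :: nat and S :: "nat series"
  assumes "N \<ge> 3"
    and "\<forall>u. S u \<noteq> 0 \<longrightarrow> set u \<subseteq> tAlph N"
    and "\<forall>u. S u \<in> QmuN N"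
  shows "piY (F N S) = F_Y N (piY S) \<and> p N (F N S) = F N (q N S)"
proof
  have N0: "N > 0" using assms(1) by simp
  show "piY (F N S) = F_Y N (piY S)"
  proof
    fix w
    have eq: "\<And>u. length u = length w \<Longrightarrow> piY S u * fw N u w = (if w = [] \<or> last w \<noteq> Z0 then S u * fw N u w else 0)"
    proof -
      fix u :: "nat letter list" assume lu: "length u = length w"
      show "piY S u * fw N u w = (if w = [] \<or> last w \<noteq> Z0 then S u * fw N u w else 0)"
      proof (cases "fw N u w = 0")
        case False
        have m: "map (\<lambda>x. x = Z0) u = map (\<lambda>x. x = Z0) w" using fw_pattern[OF False] .
        have "w = [] \<longleftrightarrow> u = []" using lu by auto
        moreover have "(last w = Z0) = (last u = Z0)" if "w \<noteq> []"
        proof -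
          have "u \<noteq> []" using lu that by auto
          have "last (map (\<lambda>x. x = Z0) u) = last (map (\<lambda>x. x = Z0) w)" using m by simp
          then show ?thesis using that \<open>u \<noteq> []\<close> by (simp add: last_map)
        qed
        ultimately show ?thesis by (auto simp: piY_def)
      qed simp
    qed
    show "piY (F N S) w = F_Y N (piY S) w"
    proof (cases "w = [] \<or> last w \<noteq> Z0")
      case True
      then have "piY (F N S) w = F N S w" by (simp add: piY_def)
      also have "\<dots> = F_Y N (piY S) w"
        unfolding F_Y_def F_def F_word_fw
      proof (intro sum.cong refl)
        fix x assume "x \<in> {u. length u = length w \<and> set u \<subseteq> tAlph N}"
        then have lx: "length x = length w" by simp
        have c: "(w = [] \<or> last w \<noteq> Z0) = True" using True by simp
        show "S x * fw N x w = piY S x * fw N x w" by (simp only: eq[OF lx] c if_True)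
      qed
      finally show ?thesis .
    next
      case False
      then have "piY (F N S) w = 0" by (simp add: piY_def)
      also have "\<dots> = F_Y N (piY S) w"
        unfolding F_Y_def F_def F_word_fw
      proof (rule sum.neutral[symmetric], intro ballI)
        fix x assume "x \<in> {u. length u = length w \<and> set u \<subseteq> tAlph N}"
        then have lx: "length x = length w" by simp
        show "piY S x * fw N x w = 0" using eq[OF lx] False by simp
      qed
      finally show ?thesis .
    qed
  qed
next
  show "p N (F N S) = F N (q N S)" by (rule p_part[OF assms(1)])
qed

end
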